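(* Let $A\colon X\to Y$ be a compact linear operator between separable Hilbert spaces with infinite-dimensional range, where $X=L^2(\mathcal{M})$, with singular value decomposition $Ax=\sum_{n=1}^\infty\sigma_n\langle x,v_n\rangle_X u_n$ such that $v_n\in L^\infty(\mathcal{M})$ for all $n\in\mathbb{N}$ and $$\sum_{n=1}^\infty\sigma_n^\eta\|v_n\|_{L^\infty(\mathcal{M})}^2<\infty$$ for some $\eta>0$. For a real sequence $(c_n)$ and $\alpha>0$ let $T^c_\alpha y=\sum_{n=1}^\infty\frac{\sigma_n}{\sigma_n^2+\alpha c_n}\langle y,u_n\rangle_Y v_n$. If $\eta\le2$, then for any sequence with $c_n\ge c_0>0$ for all $n$, the operator $T^c_\alpha\colon Y\to L^\infty(\mathcal{M})$ is bounded. If $\eta>2$, then for any sequence with $c_n\ge C\sigma_n^{1-\eta/2}$ for all $n$, with an arbitrary constant $C>0$, the operator $T^c_\alpha\colon Y\to L^\infty(\mathcal{M})$ is bounded. In both cases there is $C'>0$ independent of $\alpha$ such that $$\|T^c_\alpha\|_{Y\to L^\infty(\mathcal{M})}\le\frac{C'}{\alpha}\qquad\text{for all }\alpha>0.$$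
   Context: $\mathcal{M}$ is a measure space. The SVD consists of orthonormal systems $(u_n)$ in $Y$ and $(v_n)$ in $X$ and a non-increasing sequence $(\sigma_n)$ of positive reals with $\sigma_n\to0$. *)

theory Defs
  imports "HOL-Probability.Probability"
begin

definition L2 :: "'a measure \<Rightarrow> ('a \<Rightarrow> real) set" where
  "L2 M = {f. f \<in> borel_measurable M \<and> integrable M (\<lambda>x. (f x)\<^sup>2)}"

definition L2_inner :: "'a measure \<Rightarrow> ('a \<Rightarrow> real) \<Rightarrow> ('a \<Rightarrow> real) \<Rightarrow> real" where
  "L2_inner M f g = (\<integral>x. f x * g x \<partial>M)"

definition Linf :: "'a measure \<Rightarrow> ('a \<Rightarrow> real) set" where
  "Linf M = {f. f \<in> borel_measurable M \<and> esssup M (\<lambda>x. ereal \<bar>f x\<bar>) < \<infinity>}"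

definition Linf_norm :: "'a measure \<Rightarrow> ('a \<Rightarrow> real) \<Rightarrow> real" where
  "Linf_norm M f = real_of_ereal (esssup M (\<lambda>x. ereal \<bar>f x\<bar>))"

definition L2_separable :: "'a measure \<Rightarrow> bool" where
  "L2_separable M \<longleftrightarrow> (\<exists>D. countable D \<and> D \<subseteq> L2 M \<and>
     (\<forall>f\<in>L2 M. \<forall>e>0. \<exists>g\<in>D. (\<integral>x. (f x - g x)\<^sup>2 \<partial>M) < e))"

definition L2_limit :: "'a measure \<Rightarrow> (nat \<Rightarrow> 'a \<Rightarrow> real) \<Rightarrow> ('a \<Rightarrow> real) \<Rightarrow> bool" where
  "L2_limit M S f \<longleftrightarrow> f \<in> L2 M \<and>
     (\<lambda>N. \<integral>x. (f x - S N x)\<^sup>2 \<partial>M) \<longlonglongrightarrow> 0"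

text \<open>f is (a representative of) T^c_alpha y, i.e. the L2-sum of the series
  sum_n sigma_n/(sigma_n^2 + alpha c_n) <y,u_n> v_n.\<close>
definition Tc_rep :: "'a measure \<Rightarrow> (nat \<Rightarrow> real) \<Rightarrow> (nat \<Rightarrow> 'b::real_inner) \<Rightarrow>
    (nat \<Rightarrow> 'a \<Rightarrow> real) \<Rightarrow> (nat \<Rightarrow> real) \<Rightarrow> real \<Rightarrow> 'b \<Rightarrow> ('a \<Rightarrow> real) \<Rightarrow> bool" where
  "Tc_rep M \<sigma> u v c \<alpha> y f \<longleftrightarrow>
     L2_limit M (\<lambda>N x. \<Sum>n<N. \<sigma> n / ((\<sigma> n)\<^sup>2 + \<alpha> * c n) * (y \<bullet> u n) * v n x) f"

end

theory Submission
  imports Defs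
begin
lemma L2_prod_integrable:
  assumes "f \<in> L2 M" "g \<in> L2 M"
  shows "integrable M (\<lambda>x. f x * g x)"
proof (rule Bochner_Integration.integrable_bound)
  show "integrable M (\<lambda>x. (f x)\<^sup>2 + (g x)\<^sup>2)" using assms unfolding L2_def by auto
  show "(\<lambda>x. f x * g x) \<in> borel_measurable M" using assms unfolding L2_def by auto
  show "AE x in M. norm (f x * g x) \<le> norm ((f x)\<^sup>2 + (g x)\<^sup>2)"
  proof (rule AE_I2)
    fix x
    have "2 * \<bar>f x\<bar> * \<bar>g x\<bar> \<le> (f x)\<^sup>2 + (g x)\<^sup>2"
      by (metis abs_mult_self_eq power2_eq_square sum_squares_bound abs_mult abs_ge_zero
          mult.assoc)
    moreover have "0 \<le> \<bar>f x\<bar> * \<bar>g x\<bar>" by simp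
    moreover have "norm (f x * g x) = \<bar>f x\<bar> * \<bar>g x\<bar>" by (simp add: abs_mult)
    moreover have "norm ((f x)\<^sup>2 + (g x)\<^sup>2) = (f x)\<^sup>2 + (g x)\<^sup>2" by simp
    ultimately show "norm (f x * g x) \<le> norm ((f x)\<^sup>2 + (g x)\<^sup>2)"
      by linarith
  qed
qed

lemma L2_finite_sum:
  assumes v_L2: "\<And>n. v n \<in> L2 M"
    and v_orth: "\<And>n m. L2_inner M (v n) (v m) = (if n = m then 1 else 0)"
    and fin: "finite I"
  shows "integrable M (\<lambda>x. (\<Sum>n\<in>I. a n * v n x)\<^sup>2)"
    and "(\<integral>x. (\<Sum>n\<in>I. a n * v n x)\<^sup>2 \<partial>M) = (\<Sum>n\<in>I. (a n)\<^sup>2)"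
proof -
  have eq: "(\<lambda>x. (\<Sum>n\<in>I. a n * v n x)\<^sup>2) = (\<lambda>x. \<Sum>n\<in>I. \<Sum>m\<in>I. a n * a m * (v n x * v m x))"
    by (auto simp: power2_eq_square sum_product algebra_simps)
  have int: "integrable M (\<lambda>x. a n * a m * (v n x * v m x))" for n m
    using L2_prod_integrable[OF v_L2 v_L2] by auto
  show "integrable M (\<lambda>x. (\<Sum>n\<in>I. a n * v n x)\<^sup>2)"
    unfolding eq using int by auto
  have "(\<integral>x. (\<Sum>n\<in>I. a n * v n x)\<^sup>2 \<partial>M) = (\<Sum>n\<in>I. \<Sum>m\<in>I. a n * a m * L2_inner M (v n) (v m))"
    unfolding eq L2_inner_def using int by (simp add: integral_sum)
  also have "\<dots> = (\<Sum>n\<in>I. (a n)\<^sup>2)"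
    using fin by (simp add: v_orth power2_eq_square if_distrib sum.delta cong: if_cong)
  finally show "(\<integral>x. (\<Sum>n\<in>I. a n * v n x)\<^sup>2 \<partial>M) = (\<Sum>n\<in>I. (a n)\<^sup>2)" .
qed


lemma L2_measurable: "f \<in> L2 M \<Longrightarrow> f \<in> borel_measurable M"
  unfolding L2_def by auto

lemma L2_sq_integrable: "f \<in> L2 M \<Longrightarrow> integrable M (\<lambda>x. (f x)\<^sup>2)"
  unfolding L2_def by auto

lemma sum_measurable:
  assumes v_L2: "\<And>n. v n \<in> L2 M"
  shows "(\<lambda>x. \<Sum>n\<in>I. a n * v n x) \<in> borel_measurable M"
  using L2_measurable[OF v_L2] by measurable

lemma diff_sq_integrable:
  fixes f g :: "'a \<Rightarrow> real"
  assumes "f \<in> borel_measurable M" "g \<in> borel_measurable M"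
    "integrable M (\<lambda>x. (f x)\<^sup>2)" "integrable M (\<lambda>x. (g x)\<^sup>2)"
  shows "integrable M (\<lambda>x. (f x - g x)\<^sup>2)"
proof (rule Bochner_Integration.integrable_bound)
  show "integrable M (\<lambda>x. 2 * (f x)\<^sup>2 + 2 * (g x)\<^sup>2)" using assms by auto
  show "(\<lambda>x. (f x - g x)\<^sup>2) \<in> borel_measurable M" using assms by measurable
  show "AE x in M. norm ((f x - g x)\<^sup>2) \<le> norm (2 * (f x)\<^sup>2 + 2 * (g x)\<^sup>2)"
  proof (rule AE_I2)
    fix x
    have "(f x - g x)\<^sup>2 \<le> 2 * (f x)\<^sup>2 + 2 * (g x)\<^sup>2"
      using sum_squares_ge_zero[of "f x + g x" 0] by (simp add: power2_eq_square algebra_simps)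
    then show "norm ((f x - g x)\<^sup>2) \<le> norm (2 * (f x)\<^sup>2 + 2 * (g x)\<^sup>2)" by simp
  qed
qed

lemma L2_limit_bound:
  assumes v_L2: "\<And>n. v n \<in> L2 M"
    and v_orth: "\<And>n m. L2_inner M (v n) (v m) = (if n = m then 1 else 0)"
    and lim: "L2_limit M (\<lambda>N x. \<Sum>n<N. a n * v n x) f"
    and bnd: "AE x in M. \<forall>N. \<bar>\<Sum>n<N. a n * v n x\<bar> \<le> B"
    and B: "B \<ge> 0"
  shows "f \<in> Linf M \<and> Linf_norm M f \<le> B"
proof -
  define S where "S N x = (\<Sum>n<N. a n * v n x)" for N x
  have fL2: "f \<in> L2 M" and conv: "(\<lambda>N. \<integral>x. (f x - S N x)\<^sup>2 \<partial>M) \<longlonglongrightarrow> 0"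
    using lim unfolding L2_limit_def S_def by auto
  have fm[measurable]: "f \<in> borel_measurable M" using L2_measurable[OF fL2] .
  have Sm[measurable]: "S N \<in> borel_measurable M" for N
    unfolding S_def[abs_def] by (rule sum_measurable[OF v_L2])
  have intd: "integrable M (\<lambda>x. (f x - S N x)\<^sup>2)" for N
    using diff_sq_integrable[OF fm Sm L2_sq_integrable[OF fL2]] L2_finite_sum(1)[OF v_L2 v_orth]
    unfolding S_def by auto
  define g where "g x = ennreal ((max 0 (\<bar>f x\<bar> - B))\<^sup>2)" for x
  have gm[measurable]: "g \<in> borel_measurable M" unfolding g_def by measurable
  have le: "integral\<^sup>N M g \<le> ennreal (\<integral>x. (f x - S N x)\<^sup>2 \<partial>M)" for N
  proof -
    have "integral\<^sup>N M g \<le> (\<integral>\<^sup>+x. ennreal ((f x - S N x)\<^sup>2) \<partial>M)"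
    proof (rule nn_integral_mono_AE)
      show "AE x in M. g x \<le> ennreal ((f x - S N x)\<^sup>2)"
        using bnd
      proof eventually_elim
        case (elim x)
        then have "\<bar>S N x\<bar> \<le> B" unfolding S_def by auto
        then have "max 0 (\<bar>f x\<bar> - B) \<le> \<bar>f x - S N x\<bar>" by auto
        then have "(max 0 (\<bar>f x\<bar> - B))\<^sup>2 \<le> (\<bar>f x - S N x\<bar>)\<^sup>2"
          by (intro power_mono) auto
        then show ?case unfolding g_def by (simp add: ennreal_leI)
      qed
    qed
    also have "\<dots> = ennreal (\<integral>x. (f x - S N x)\<^sup>2 \<partial>M)"
      by (rule nn_integral_eq_integral[OF intd]) auto
    finally show ?thesis .
  qed
  have "(\<lambda>N. ennreal (\<integral>x. (f x - S N x)\<^sup>2 \<partial>M)) \<longlonglongrightarrow> ennreal 0"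
    by (rule tendsto_ennrealI[OF conv])
  then have "integral\<^sup>N M g \<le> ennreal 0"
    by (rule LIMSEQ_le_const) (use le in auto)
  then have "integral\<^sup>N M g = 0" by simp
  then have "AE x in M. g x = 0" using nn_integral_0_iff_AE[OF gm] by simp
  then have AEf: "AE x in M. ereal \<bar>f x\<bar> \<le> ereal B"
  proof eventually_elim
    case (elim x)
    then have "(max 0 (\<bar>f x\<bar> - B))\<^sup>2 \<le> 0" unfolding g_def
      by (metis ennreal_eq_0_iff)
    then have "(max 0 (\<bar>f x\<bar> - B))\<^sup>2 = 0" by (intro antisym) simp_all
    then have "max 0 (\<bar>f x\<bar> - B) = 0" by simp
    then show ?case by simp
  qed
  have es: "esssup M (\<lambda>x. ereal \<bar>f x\<bar>) \<le> ereal B"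
    by (rule esssup_I) (use AEf in auto)
  then have "f \<in> Linf M" unfolding Linf_def using fm by (auto intro: le_less_trans)
  moreover have "Linf_norm M f \<le> B"
    unfolding Linf_norm_def using es B
    by (cases "esssup M (\<lambda>x. ereal \<bar>f x\<bar>)") auto
  ultimately show ?thesis by simp
qed


lemma L2_limit_exists:
  assumes v_L2: "\<And>n. v n \<in> L2 M"
    and v_orth: "\<And>n m. L2_inner M (v n) (v m) = (if n = m then 1 else 0)"
    and summ: "summable (\<lambda>n. (a n)\<^sup>2)"
    and bnd: "AE x in M. \<forall>N. (\<Sum>n<N. \<bar>a n * v n x\<bar>) \<le> B"
  shows "\<exists>f. L2_limit M (\<lambda>N x. \<Sum>n<N. a n * v n x) f"
proof -
  define S where "S N x = (\<Sum>n<N. a n * v n x)" for N x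
  have Sm[measurable]: "S N \<in> borel_measurable M" for N
    unfolding S_def[abs_def] by (rule sum_measurable[OF v_L2])
  have S2: "integrable M (\<lambda>x. (S N x)\<^sup>2)" for N
    using L2_finite_sum(1)[OF v_L2 v_orth] unfolding S_def by auto
  define f where "f x = lim (\<lambda>N. S N x)" for x
  have fm[measurable]: "f \<in> borel_measurable M" unfolding f_def[abs_def] by measurable
  have conv: "AE x in M. (\<lambda>N. S N x) \<longlonglongrightarrow> f x"
    using bnd
  proof eventually_elim
    case (elim x)
    have "summable (\<lambda>n. \<bar>a n * v n x\<bar>)"
      by (rule summableI_nonneg_bounded[where x=B]) (use elim in auto)
    then have "summable (\<lambda>n. a n * v n x)" by (rule summable_rabs_cancel)
    then have "(\<lambda>N. S N x) \<longlonglongrightarrow> (\<Sum>n. a n * v n x)"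
      unfolding S_def by (rule summable_LIMSEQ)
    then show ?case unfolding f_def by (metis limI)
  qed
  define T where "T N = (\<Sum>k. (a (k + N))\<^sup>2)" for N
  have T0: "T N \<ge> 0" for N
    unfolding T_def by (intro suminf_nonneg summable_ignore_initial_segment[OF summ]) auto
  have Tlim: "T \<longlonglongrightarrow> 0" unfolding T_def by (rule suminf_exist_split2[OF summ])
  have key: "(\<integral>\<^sup>+x. ennreal ((f x - S N x)\<^sup>2) \<partial>M) \<le> ennreal (T N)" for N
  proof -
    define h where "h K x = ennreal ((S (K + N) x - S N x)\<^sup>2)" for K x
    have hm: "h K \<in> borel_measurable M" for K unfolding h_def by measurable
    have diff: "S (K + N) x - S N x = (\<Sum>k<K. a (k + N) * v (k + N) x)" for K x
      by (induction K) (auto simp: S_def add.commute)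
    have hint: "integral\<^sup>N M (h K) \<le> ennreal (T N)" for K
    proof -
      have "integral\<^sup>N M (h K) = ennreal (\<integral>x. (\<Sum>k<K. a (k + N) * v (k + N) x)\<^sup>2 \<partial>M)"
        unfolding h_def diff
        by (rule nn_integral_eq_integral)
          (use L2_finite_sum(1)[of "\<lambda>k. v (k + N)" M "{..<K}" "\<lambda>k. a (k + N)"] v_L2 v_orth in auto)
      also have "\<dots> = ennreal (\<Sum>k<K. (a (k + N))\<^sup>2)"
        using L2_finite_sum(2)[of "\<lambda>k. v (k + N)" M "{..<K}" "\<lambda>k. a (k + N)"] v_L2 v_orth by auto
      also have "\<dots> \<le> ennreal (T N)"
        unfolding T_def
        by (intro ennreal_leI sum_le_suminf summable_ignore_initial_segment[OF summ]) auto
      finally show ?thesis .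
    qed
    have "(\<integral>\<^sup>+x. ennreal ((f x - S N x)\<^sup>2) \<partial>M) = (\<integral>\<^sup>+x. liminf (\<lambda>K. h K x) \<partial>M)"
    proof (rule nn_integral_cong_AE)
      show "AE x in M. ennreal ((f x - S N x)\<^sup>2) = liminf (\<lambda>K. h K x)"
        using conv
      proof eventually_elim
        case (elim x)
        have "(\<lambda>K. S (K + N) x) \<longlonglongrightarrow> f x" by (rule LIMSEQ_ignore_initial_segment[OF elim])
        then have "(\<lambda>K. h K x) \<longlonglongrightarrow> ennreal ((f x - S N x)\<^sup>2)"
          unfolding h_def by (intro tendsto_ennrealI tendsto_intros)
        then show ?case by (intro lim_imp_Liminf[symmetric]) auto
      qed
    qed
    also have "\<dots> \<le> liminf (\<lambda>K. integral\<^sup>N M (h K))"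
      by (rule nn_integral_liminf[OF hm])
    also have "\<dots> \<le> liminf (\<lambda>K. ennreal (T N))"
      by (intro Liminf_mono) (use hint in auto)
    also have "\<dots> = ennreal (T N)"
      by (simp add: Liminf_const)
    finally show ?thesis .
  qed
  have "(\<integral>\<^sup>+x. ennreal (norm ((f x)\<^sup>2)) \<partial>M) < \<infinity>"
    using le_less_trans[OF key[of 0] ennreal_less_top] by (simp add: S_def)
  then have f2: "integrable M (\<lambda>x. (f x)\<^sup>2)" by (intro integrableI_bounded) auto
  have fL2: "f \<in> L2 M" unfolding L2_def using f2 by auto
  have intd: "integrable M (\<lambda>x. (f x - S N x)\<^sup>2)" for N
    by (rule diff_sq_integrable[OF fm Sm f2 S2])
  have le: "(\<integral>x. (f x - S N x)\<^sup>2 \<partial>M) \<le> T N" for N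
  proof -
    have "ennreal (\<integral>x. (f x - S N x)\<^sup>2 \<partial>M) = (\<integral>\<^sup>+x. ennreal ((f x - S N x)\<^sup>2) \<partial>M)"
      by (rule nn_integral_eq_integral[OF intd, symmetric]) auto
    then have "ennreal (\<integral>x. (f x - S N x)\<^sup>2 \<partial>M) \<le> ennreal (T N)" using key[of N] by simp
    then show ?thesis using T0[of N] by (simp add: ennreal_le_iff)
  qed
  have "(\<lambda>N. \<integral>x. (f x - S N x)\<^sup>2 \<partial>M) \<longlonglongrightarrow> 0"
    by (rule tendsto_sandwich[OF _ _ tendsto_const Tlim]) (use le in auto)
  then have "L2_limit M (\<lambda>N x. \<Sum>n<N. a n * v n x) f"
    unfolding L2_limit_def S_def using fL2 by auto
  then show ?thesis by blast
qed


lemma bessel: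
  fixes u :: "nat \<Rightarrow> 'b::real_inner"
  assumes orth: "\<And>n m. u n \<bullet> u m = (if n = m then 1 else 0)"
  shows "(\<Sum>n<N. (y \<bullet> u n)\<^sup>2) \<le> (norm y)\<^sup>2"
proof -
  define s where "s = (\<Sum>n<N. (y \<bullet> u n) *\<^sub>R u n)"
  have ys: "y \<bullet> s = (\<Sum>n<N. (y \<bullet> u n)\<^sup>2)"
    unfolding s_def by (simp add: inner_sum_right power2_eq_square)
  have ss: "s \<bullet> s = (\<Sum>n<N. (y \<bullet> u n)\<^sup>2)"
    unfolding s_def
    by (simp add: inner_sum_right inner_sum_left orth power2_eq_square if_distrib sum.delta cong: if_cong)
  have "0 \<le> (y - s) \<bullet> (y - s)" by simp
  also have "\<dots> = y \<bullet> y - 2 * (y \<bullet> s) + s \<bullet> s"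
    by (simp add: inner_diff_left inner_diff_right inner_commute)
  finally show ?thesis using ys ss by (simp add: power2_norm_eq_inner)
qed

lemma bessel_summable:
  fixes u :: "nat \<Rightarrow> 'b::real_inner"
  assumes orth: "\<And>n m. u n \<bullet> u m = (if n = m then 1 else 0)"
  shows "summable (\<lambda>n. (y \<bullet> u n)\<^sup>2)"
  by (rule summableI_nonneg_bounded[where x="(norm y)\<^sup>2"]) (use bessel[OF orth] in auto)


lemma sq_split: "(x::real) > 0 \<Longrightarrow> x\<^sup>2 = x powr (2 - e) * x powr e"
proof -
  assume x: "x > 0"
  have "x powr (2 - e) * x powr e = x powr ((2 - e) + e)" by (rule powr_add[symmetric])
  also have "(2 - e) + e = 2" by simp
  finally show ?thesis using x by simp
qed

lemma sq_powr: "((x::real) powr a)\<^sup>2 = x powr (2 * a)"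
proof -
  have "(x powr a)\<^sup>2 = x powr a * x powr a" by (simp add: power2_eq_square)
  also have "\<dots> = x powr (a + a)" by (rule powr_add[symmetric])
  also have "a + a = 2 * a" by simp
  finally show ?thesis .
qed

lemma K_exists:
  fixes \<sigma> c :: "nat \<Rightarrow> real" and \<eta> :: real
  assumes \<sigma>_pos: "\<And>n. \<sigma> n > 0"
    and \<sigma>_noninc: "decseq \<sigma>"
    and \<eta>_pos: "\<eta> > 0"
    and c_cases: "(\<eta> \<le> 2 \<and> (\<exists>c\<^sub>0>0. \<forall>n. c n \<ge> c\<^sub>0)) \<or>
                  (\<eta> > 2 \<and> (\<exists>C>0. \<forall>n. c n \<ge> C * \<sigma> n powr (1 - \<eta> / 2)))"
  shows "\<exists>K>0. \<forall>n. c n > 0 \<and> (\<sigma> n)\<^sup>2 / (c n)\<^sup>2 \<le> K * \<sigma> n powr \<eta>"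
  using c_cases
proof
  assume "\<eta> \<le> 2 \<and> (\<exists>c\<^sub>0>0. \<forall>n. c n \<ge> c\<^sub>0)"
  then obtain c0 where e2: "\<eta> \<le> 2" and c0: "c0 > 0" "\<And>n. c n \<ge> c0" by auto
  define K where "K = \<sigma> 0 powr (2 - \<eta>) / c0\<^sup>2"
  have "K > 0" unfolding K_def using c0 \<sigma>_pos[of 0] by auto
  moreover have "c n > 0 \<and> (\<sigma> n)\<^sup>2 / (c n)\<^sup>2 \<le> K * \<sigma> n powr \<eta>" for n
  proof
    show cp: "c n > 0" using c0[of] c0(2)[of n] by linarith
    have s0: "\<sigma> n \<le> \<sigma> 0" using \<sigma>_noninc unfolding decseq_def by auto
    have "(\<sigma> n)\<^sup>2 = \<sigma> n powr (2 - \<eta>) * \<sigma> n powr \<eta>"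
      using \<sigma>_pos[of n] by (rule sq_split)
    also have "\<dots> \<le> \<sigma> 0 powr (2 - \<eta>) * \<sigma> n powr \<eta>"
      by (intro mult_right_mono powr_mono2) (use e2 s0 \<sigma>_pos[of n] in auto)
    finally have num: "(\<sigma> n)\<^sup>2 \<le> \<sigma> 0 powr (2 - \<eta>) * \<sigma> n powr \<eta>" .
    have "(\<sigma> n)\<^sup>2 / (c n)\<^sup>2 \<le> (\<sigma> n)\<^sup>2 / c0\<^sup>2"
      by (intro divide_left_mono power_mono) (use c0 c0(2)[of n] cp in auto)
    also have "\<dots> \<le> \<sigma> 0 powr (2 - \<eta>) * \<sigma> n powr \<eta> / c0\<^sup>2"
      by (intro divide_right_mono num) auto
    also have "\<dots> = K * \<sigma> n powr \<eta>" unfolding K_def by simp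
    finally show "(\<sigma> n)\<^sup>2 / (c n)\<^sup>2 \<le> K * \<sigma> n powr \<eta>" .
  qed
  ultimately show ?thesis by blast
next
  assume "\<eta> > 2 \<and> (\<exists>C>0. \<forall>n. c n \<ge> C * \<sigma> n powr (1 - \<eta> / 2))"
  then obtain C where C: "C > 0" "\<And>n. c n \<ge> C * \<sigma> n powr (1 - \<eta> / 2)" by auto
  define K where "K = 1 / C\<^sup>2"
  have "K > 0" unfolding K_def using C by auto
  moreover have "c n > 0 \<and> (\<sigma> n)\<^sup>2 / (c n)\<^sup>2 \<le> K * \<sigma> n powr \<eta>" for n
  proof
    have lp: "C * \<sigma> n powr (1 - \<eta> / 2) > 0" using C \<sigma>_pos[of n] by auto
    then show cp: "c n > 0" using C(2)[of n] by linarith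
    have sq: "(C * \<sigma> n powr (1 - \<eta> / 2))\<^sup>2 = C\<^sup>2 * \<sigma> n powr (2 - \<eta>)"
      by (simp add: power_mult_distrib sq_powr algebra_simps)
    have "(\<sigma> n)\<^sup>2 / (c n)\<^sup>2 \<le> (\<sigma> n)\<^sup>2 / (C * \<sigma> n powr (1 - \<eta> / 2))\<^sup>2"
      by (intro divide_left_mono power_mono mult_pos_pos) (use lp C(2)[of n] in auto)
    also have "\<dots> = (\<sigma> n)\<^sup>2 / (C\<^sup>2 * \<sigma> n powr (2 - \<eta>))" using sq by simp
    also have "\<dots> = K * \<sigma> n powr \<eta>"
    proof -
      have "(\<sigma> n)\<^sup>2 = \<sigma> n powr (2 - \<eta>) * \<sigma> n powr \<eta>"
        using \<sigma>_pos[of n] by (rule sq_split)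
      then show ?thesis unfolding K_def using \<sigma>_pos[of n] C by (simp add: field_simps)
    qed
    finally show "(\<sigma> n)\<^sup>2 / (c n)\<^sup>2 \<le> K * \<sigma> n powr \<eta>" .
  qed
  ultimately show ?thesis by blast
qed

theorem proposition4p13:
  fixes M :: "'a measure"
    and A :: "('a \<Rightarrow> real) \<Rightarrow> 'b :: {real_inner, complete_space}"
    and \<sigma> :: "nat \<Rightarrow> real"
    and u :: "nat \<Rightarrow> 'b"
    and v :: "nat \<Rightarrow> 'a \<Rightarrow> real"
    and \<eta> :: real
    and c :: "nat \<Rightarrow> real"
  assumes Y_separable: "separable_space (euclidean :: 'b topology)"
    and X_separable: "L2_separable M"
    and u_orthonormal: "\<And>n m. u n \<bullet> u m = (if n = m then 1 else 0)"
    and v_L2: "\<And>n. v n \<in> L2 M"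
    and v_orthonormal: "\<And>n m. L2_inner M (v n) (v m) = (if n = m then 1 else 0)"
    and \<sigma>_pos: "\<And>n. \<sigma> n > 0"
    and \<sigma>_noninc: "decseq \<sigma>"
    and \<sigma>_lim: "\<sigma> \<longlonglongrightarrow> 0"
    and A_svd: "\<And>x. x \<in> L2 M \<Longrightarrow> (\<lambda>n. (\<sigma> n * L2_inner M x (v n)) *\<^sub>R u n) sums A x"
    and v_Linf: "\<And>n. v n \<in> Linf M"
    and \<eta>_pos: "\<eta> > 0"
    and summable: "summable (\<lambda>n. \<sigma> n powr \<eta> * (Linf_norm M (v n))\<^sup>2)"
    and c_cases: "(\<eta> \<le> 2 \<and> (\<exists>c\<^sub>0>0. \<forall>n. c n \<ge> c\<^sub>0)) \<or>
                  (\<eta> > 2 \<and> (\<exists>C>0. \<forall>n. c n \<ge> C * \<sigma> n powr (1 - \<eta> / 2)))"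
  shows "\<exists>C'>0. \<forall>\<alpha>>0. \<forall>y::'b.
           (\<exists>f. Tc_rep M \<sigma> u v c \<alpha> y f) \<and>
           (\<forall>f. Tc_rep M \<sigma> u v c \<alpha> y f \<longrightarrow>
                 f \<in> Linf M \<and> Linf_norm M f \<le> C' / \<alpha> * norm y)"
proof -
  obtain K where Kpos: "K > 0" and K: "\<And>n. c n > 0 \<and> (\<sigma> n)\<^sup>2 / (c n)\<^sup>2 \<le> K * \<sigma> n powr \<eta>"
    using K_exists[OF \<sigma>_pos \<sigma>_noninc \<eta>_pos c_cases] by blast
  define L where "L n = Linf_norm M (v n)" for n
  define S\<eta> where "S\<eta> = (\<Sum>n. \<sigma> n powr \<eta> * (L n)\<^sup>2)"
  have summ': "summable (\<lambda>n. \<sigma> n powr \<eta> * (L n)\<^sup>2)" using summable unfolding L_def .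
  have S\<eta>0: "S\<eta> \<ge> 0" unfolding S\<eta>_def by (intro suminf_nonneg summ') auto
  have partial: "(\<Sum>n<N. \<sigma> n powr \<eta> * (L n)\<^sup>2) \<le> S\<eta>" for N
    unfolding S\<eta>_def by (intro sum_le_suminf summ') auto
  define C' where "C' = sqrt (K * S\<eta>) + 1"
  have C'pos: "C' > 0" unfolding C'_def using Kpos S\<eta>0 by (intro add_nonneg_pos) auto
  have AEv: "AE x in M. \<forall>n. \<bar>v n x\<bar> \<le> L n"
    unfolding AE_all_countable
  proof
    fix n
    have fin: "esssup M (\<lambda>x. ereal \<bar>v n x\<bar>) < \<infinity>" using v_Linf[of n] unfolding Linf_def by auto
    show "AE x in M. \<bar>v n x\<bar> \<le> L n"
      using esssup_AE[of "\<lambda>x. ereal \<bar>v n x\<bar>" M]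
    proof eventually_elim
      case (elim x)
      then show ?case using fin unfolding L_def Linf_norm_def
        by (cases "esssup M (\<lambda>x. ereal \<bar>v n x\<bar>)") auto
    qed
  qed
  have "\<forall>\<alpha>>0. \<forall>y::'b.
           (\<exists>f. Tc_rep M \<sigma> u v c \<alpha> y f) \<and>
           (\<forall>f. Tc_rep M \<sigma> u v c \<alpha> y f \<longrightarrow>
                 f \<in> Linf M \<and> Linf_norm M f \<le> C' / \<alpha> * norm y)"
  proof (intro allI impI)
    fix \<alpha> :: real and y :: 'b
    assume \<alpha>: "\<alpha> > 0"
    define a where "a n = \<sigma> n / ((\<sigma> n)\<^sup>2 + \<alpha> * c n) * (y \<bullet> u n)" for n
    define d where "d n = \<sigma> n / (\<alpha> * c n)" for n
    have cpos: "c n > 0" for n using K[of n] by auto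
    have d0: "d n \<ge> 0" for n unfolding d_def using \<sigma>_pos[of n] cpos[of n] \<alpha> by auto
    have ad: "\<bar>a n\<bar> \<le> \<bar>y \<bullet> u n\<bar> * d n" for n
    proof -
      have pos: "\<alpha> * c n > 0" using \<alpha> cpos[of n] by auto
      have "\<sigma> n / ((\<sigma> n)\<^sup>2 + \<alpha> * c n) \<le> d n"
        unfolding d_def by (intro divide_left_mono) (use pos \<sigma>_pos[of n] in \<open>auto intro!: mult_pos_pos add_nonneg_pos\<close>)
      moreover have "\<sigma> n / ((\<sigma> n)\<^sup>2 + \<alpha> * c n) \<ge> 0" using pos \<sigma>_pos[of n] by auto
      ultimately have "\<bar>\<sigma> n / ((\<sigma> n)\<^sup>2 + \<alpha> * c n)\<bar> * \<bar>y \<bullet> u n\<bar> \<le> d n * \<bar>y \<bullet> u n\<bar>"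
        by (simp only: abs_of_nonneg) (rule mult_right_mono, assumption, rule abs_ge_zero)
      then show ?thesis unfolding a_def by (simp only: abs_mult mult.commute)
    qed
    have d2: "(d n)\<^sup>2 \<le> K * \<sigma> n powr \<eta> / \<alpha>\<^sup>2" for n
    proof -
      have "(d n)\<^sup>2 = ((\<sigma> n)\<^sup>2 / (c n)\<^sup>2) / \<alpha>\<^sup>2"
        unfolding d_def by (simp add: power_divide power_mult_distrib mult.commute)
      also have "\<dots> \<le> K * \<sigma> n powr \<eta> / \<alpha>\<^sup>2"
        by (intro divide_right_mono) (use K[of n] in auto)
      finally show ?thesis .
    qed
    define B where "B = C' / \<alpha> * norm y"
    have B0: "B \<ge> 0" unfolding B_def using C'pos \<alpha> by auto
    have sumbound: "(\<Sum>n<N. \<bar>a n * v n x\<bar>) \<le> B" if hv: "\<forall>n. \<bar>v n x\<bar> \<le> L n" for x N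
    proof -
      have L0: "L n \<ge> 0" for n using hv[rule_format, of n] by linarith
      define P where "P = (\<Sum>n<N. \<bar>y \<bullet> u n\<bar> * (d n * L n))"
      have "(\<Sum>n<N. \<bar>a n * v n x\<bar>) \<le> P"
        unfolding P_def
      proof (rule sum_mono)
        fix n
        have "\<bar>a n * v n x\<bar> = \<bar>a n\<bar> * \<bar>v n x\<bar>" by (simp add: abs_mult)
        also have "\<dots> \<le> \<bar>a n\<bar> * L n" using hv by (intro mult_left_mono) auto
        also have "\<dots> \<le> (\<bar>y \<bullet> u n\<bar> * d n) * L n" using ad[of n] L0[of n] by (intro mult_right_mono) auto
        finally show "\<bar>a n * v n x\<bar> \<le> \<bar>y \<bullet> u n\<bar> * (d n * L n)" by (simp add: mult.assoc)
      qed
      have cs: "P\<^sup>2 \<le> (\<Sum>n<N. (\<bar>y \<bullet> u n\<bar>)\<^sup>2) * (\<Sum>n<N. (d n * L n)\<^sup>2)"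
        unfolding P_def by (rule Cauchy_Schwarz_ineq_sum)
      have b1: "(\<Sum>n<N. (\<bar>y \<bullet> u n\<bar>)\<^sup>2) \<le> (norm y)\<^sup>2"
        using bessel[OF u_orthonormal, where N=N and y=y] by simp
      have b2: "(\<Sum>n<N. (d n * L n)\<^sup>2) \<le> K * S\<eta> / \<alpha>\<^sup>2"
      proof -
        have "(\<Sum>n<N. (d n * L n)\<^sup>2) \<le> (\<Sum>n<N. K / \<alpha>\<^sup>2 * (\<sigma> n powr \<eta> * (L n)\<^sup>2))"
        proof (rule sum_mono)
          fix n
          have "(d n * L n)\<^sup>2 = (d n)\<^sup>2 * (L n)\<^sup>2" by (simp add: power_mult_distrib)
          also have "\<dots> \<le> K * \<sigma> n powr \<eta> / \<alpha>\<^sup>2 * (L n)\<^sup>2" by (intro mult_right_mono d2) auto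
          finally show "(d n * L n)\<^sup>2 \<le> K / \<alpha>\<^sup>2 * (\<sigma> n powr \<eta> * (L n)\<^sup>2)" by simp
        qed
        also have "\<dots> = K / \<alpha>\<^sup>2 * (\<Sum>n<N. \<sigma> n powr \<eta> * (L n)\<^sup>2)" by (simp add: sum_distrib_left)
        also have "\<dots> \<le> K / \<alpha>\<^sup>2 * S\<eta>" by (intro mult_left_mono partial) (use Kpos in auto)
        finally show ?thesis by simp
      qed
      have "(\<Sum>n<N. (\<bar>y \<bullet> u n\<bar>)\<^sup>2) * (\<Sum>n<N. (d n * L n)\<^sup>2) \<le> (norm y)\<^sup>2 * (K * S\<eta> / \<alpha>\<^sup>2)"
        by (rule mult_mono[OF b1 b2]) (simp_all add: sum_nonneg)
      with cs have "P\<^sup>2 \<le> (norm y)\<^sup>2 * (K * S\<eta> / \<alpha>\<^sup>2)" by (rule order_trans)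
      also have "\<dots> = (sqrt (K * S\<eta>) / \<alpha> * norm y)\<^sup>2"
        using Kpos S\<eta>0 by (simp add: power_mult_distrib power_divide)
      finally have "P \<le> sqrt (K * S\<eta>) / \<alpha> * norm y"
        by (rule power2_le_imp_le) (use \<alpha> Kpos S\<eta>0 in auto)
      also have "\<dots> \<le> B" unfolding B_def C'_def
        by (intro mult_right_mono divide_right_mono) (use \<alpha> in auto)
      finally show ?thesis using \<open>(\<Sum>n<N. \<bar>a n * v n x\<bar>) \<le> P\<close> by linarith
    qed
    have bnd: "AE x in M. \<forall>N. (\<Sum>n<N. \<bar>a n * v n x\<bar>) \<le> B"
      using AEv by eventually_elim (rule allI, rule sumbound)
    have bnd': "AE x in M. \<forall>N. \<bar>\<Sum>n<N. a n * v n x\<bar> \<le> B"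
      using bnd
    proof eventually_elim
      case (elim x)
      show ?case
      proof
        fix N
        have "\<bar>\<Sum>n<N. a n * v n x\<bar> \<le> (\<Sum>n<N. \<bar>a n * v n x\<bar>)" by (rule sum_abs)
        then show "\<bar>\<Sum>n<N. a n * v n x\<bar> \<le> B" using elim[rule_format, of N] by linarith
      qed
    qed
    have summa: "summable (\<lambda>n. (a n)\<^sup>2)"
    proof (rule summable_comparison_test[OF _ summable_mult2[OF bessel_summable[OF u_orthonormal, of y]]])
      show "\<exists>N. \<forall>n\<ge>N. norm ((a n)\<^sup>2) \<le> (y \<bullet> u n)\<^sup>2 * (K * \<sigma> 0 powr \<eta> / \<alpha>\<^sup>2)"
      proof (intro exI allI impI)
        fix n
        have s0: "\<sigma> n \<le> \<sigma> 0" using \<sigma>_noninc unfolding decseq_def by auto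
        have "(a n)\<^sup>2 \<le> (\<bar>y \<bullet> u n\<bar> * d n)\<^sup>2"
          using ad[of n] by (metis abs_ge_zero power2_abs power_mono)
        also have "\<dots> = (y \<bullet> u n)\<^sup>2 * (d n)\<^sup>2" by (simp add: power_mult_distrib)
        also have "\<dots> \<le> (y \<bullet> u n)\<^sup>2 * (K * \<sigma> 0 powr \<eta> / \<alpha>\<^sup>2)"
        proof -
          have "K * \<sigma> n powr \<eta> \<le> K * \<sigma> 0 powr \<eta>"
            by (intro mult_left_mono powr_mono2) (use s0 \<sigma>_pos[of n] \<eta>_pos Kpos in auto)
          then have "K * \<sigma> n powr \<eta> / \<alpha>\<^sup>2 \<le> K * \<sigma> 0 powr \<eta> / \<alpha>\<^sup>2"
            by (rule divide_right_mono) simp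
          then have "(d n)\<^sup>2 \<le> K * \<sigma> 0 powr \<eta> / \<alpha>\<^sup>2" using d2[of n] by linarith
          then show ?thesis by (rule mult_left_mono) simp
        qed
        finally show "norm ((a n)\<^sup>2) \<le> (y \<bullet> u n)\<^sup>2 * (K * \<sigma> 0 powr \<eta> / \<alpha>\<^sup>2)" by simp
      qed
    qed
    have ex: "\<exists>f. L2_limit M (\<lambda>N x. \<Sum>n<N. a n * v n x) f"
      by (rule L2_limit_exists[OF v_L2 v_orthonormal summa bnd])
    have all: "f \<in> Linf M \<and> Linf_norm M f \<le> B" if "L2_limit M (\<lambda>N x. \<Sum>n<N. a n * v n x) f" for f
      by (rule L2_limit_bound[OF v_L2 v_orthonormal that bnd' B0])
    show "(\<exists>f. Tc_rep M \<sigma> u v c \<alpha> y f) \<and>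
           (\<forall>f. Tc_rep M \<sigma> u v c \<alpha> y f \<longrightarrow>
                 f \<in> Linf M \<and> Linf_norm M f \<le> C' / \<alpha> * norm y)"
    proof (rule conjI)
      show "\<exists>f. Tc_rep M \<sigma> u v c \<alpha> y f" using ex unfolding Tc_rep_def a_def .
    next
      show "\<forall>f. Tc_rep M \<sigma> u v c \<alpha> y f \<longrightarrow> f \<in> Linf M \<and> Linf_norm M f \<le> C' / \<alpha> * norm y"
      proof (intro allI impI)
      fix f assume "Tc_rep M \<sigma> u v c \<alpha> y f"
      then have "L2_limit M (\<lambda>N x. \<Sum>n<N. a n * v n x) f" unfolding Tc_rep_def a_def .
      then show "f \<in> Linf M \<and> Linf_norm M f \<le> C' / \<alpha> * norm y" using all unfolding B_def by blast
      qed
    qed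
  qed
  then show ?thesis using C'pos by blast
qed

end
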